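(* For every $n\ge1$ let $f(n)$ be the minimum of $\Phi(T)$ over all binary phylogenetic trees $T$ with $n$ leaves. Then $f(1)=f(2)=0$ and, for every $n\ge 3$, $$f(n)=f(\lceil n/2\rceil)+f(\lfloor n/2\rfloor)+\binom{\lceil n/2\rceil}{2}+\binom{\lfloor n/2\rfloor}{2}.$$
   Context: A phylogenetic tree with $n$ leaves is a rooted tree whose leaves are bijectively labeled by $\{1,\dots,n\}$; binary means every internal node has exactly two children (the one-leaf tree is a single node). The depth $\delta_T(v)$ is the number of arcs from the root to $v$; for leaves $i,j$, $\varphi_T(i,j)=\delta_T(LCA_T(i,j))$ ($LCA$ = lowest common ancestor), and $\Phi(T)=\sum_{1\le i<j\le n}\varphi_T(i,j)$ is the total cophenetic index. *)

theory Defs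
  imports Main
begin

datatype btree = Leaf nat | Node btree btree

fun leaves :: "btree \<Rightarrow> nat list" where
  "leaves (Leaf k) = [k]"
| "leaves (Node l r) = leaves l @ leaves r"

definition is_phylo :: "nat \<Rightarrow> btree \<Rightarrow> bool" where
  "is_phylo n t \<longleftrightarrow> distinct (leaves t) \<and> set (leaves t) = {1..n}"

fun lca_depth :: "btree \<Rightarrow> nat \<Rightarrow> nat \<Rightarrow> nat" where
  "lca_depth (Leaf k) i j = 0"
| "lca_depth (Node l r) i j =
     (if i \<in> set (leaves l) \<and> j \<in> set (leaves l) then 1 + lca_depth l i j
      else if i \<in> set (leaves r) \<and> j \<in> set (leaves r) then 1 + lca_depth r i j
      else 0)"

definition cophenetic :: "nat \<Rightarrow> btree \<Rightarrow> nat" where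
  "cophenetic n t = (\<Sum>(i,j)\<in>{(i,j). 1 \<le> i \<and> i < j \<and> j \<le> n}. lca_depth t i j)"

definition min_cophenetic :: "nat \<Rightarrow> nat" where
  "min_cophenetic n = Min {cophenetic n t | t. is_phylo n t}"

end

theory Submission
  imports Defs
begin

fun sz :: "btree \<Rightarrow> nat" where
  "sz (Leaf _) = 1"
| "sz (Node l r) = sz l + sz r"

fun cs :: "btree \<Rightarrow> nat" where
  "cs (Leaf _) = 0"
| "cs (Node l r) = cs l + cs r + (sz l choose 2) + (sz r choose 2)"

definition PA :: "nat set \<Rightarrow> (nat \<times> nat) set" where
  "PA X = {(i,j). i \<in> X \<and> j \<in> X \<and> i < j}"

lemma sz_pos: "sz t \<ge> 1"
  by (induction t) auto

lemma sz_len: "sz t = length (leaves t)"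
  by (induction t) auto

lemma choose2_Suc: "Suc a choose 2 = (a choose 2) + a"
  by (simp add: numeral_2_eq_2)

lemma PA_finite: "finite X \<Longrightarrow> finite (PA X)"
  by (rule finite_subset[of _ "X \<times> X"]) (auto simp: PA_def)

lemma card_PA:
  assumes "finite X" shows "card (PA X) = card X choose 2"
proof -
  have "bij_betw (\<lambda>(i,j). {i,j}) (PA X) {B. B \<subseteq> X \<and> card B = 2}"
  proof (rule bij_betw_imageI)
    show "inj_on (\<lambda>(i,j). {i,j}) (PA X)"
      unfolding inj_on_def PA_def
      by (auto simp: doubleton_eq_iff)
    show "(\<lambda>(i,j). {i,j}) ` PA X = {B. B \<subseteq> X \<and> card B = 2}"
    proof
      show "(\<lambda>(i,j). {i,j}) ` PA X \<subseteq> {B. B \<subseteq> X \<and> card B = 2}"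
        by (auto simp: PA_def)
      show "{B. B \<subseteq> X \<and> card B = 2} \<subseteq> (\<lambda>(i,j). {i,j}) ` PA X"
      proof
        fix B assume "B \<in> {B. B \<subseteq> X \<and> card B = 2}"
        then obtain x y where B: "B = {x,y}" "x \<noteq> y" "B \<subseteq> X"
          by (auto simp: card_2_iff)
        show "B \<in> (\<lambda>(i,j). {i,j}) ` PA X"
        proof (cases "x < y")
          case True
          then show ?thesis using B
            by (intro image_eqI[of _ _ "(x,y)"]) (auto simp: PA_def)
        next
          case False
          then show ?thesis using B
            by (intro image_eqI[of _ _ "(y,x)"]) (auto simp: PA_def)
        qed
      qed
    qed
  qed
  then have "card (PA X) = card {B. B \<subseteq> X \<and> card B = 2}"
    by (rule bij_betw_same_card)
  also have "\<dots> = card X choose 2" using assms by (rule n_subsets)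
  finally show ?thesis .
qed

lemma cs_sum:
  "distinct (leaves t) \<Longrightarrow> (\<Sum>p\<in>PA (set (leaves t)). lca_depth t (fst p) (snd p)) = cs t"
proof (induction t)
  case (Leaf k)
  have "PA {k} = {}" by (auto simp: PA_def)
  then show ?case by simp
next
  case (Node l r)
  define L where "L = set (leaves l)"
  define R where "R = set (leaves r)"
  have dl: "distinct (leaves l)" and dr: "distinct (leaves r)" and disj: "L \<inter> R = {}"
    using Node.prems by (auto simp: L_def R_def)
  have fin: "finite L" "finite R" by (auto simp: L_def R_def)
  let ?f = "\<lambda>p. lca_depth (Node l r) (fst p) (snd p)"
  have sub: "PA L \<union> PA R \<subseteq> PA (L \<union> R)" by (auto simp: PA_def)
  have zero: "\<forall>p\<in>PA (L \<union> R) - (PA L \<union> PA R). ?f p = 0"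
    by (auto simp: PA_def L_def R_def)
  have "(\<Sum>p\<in>PA (L \<union> R). ?f p) = (\<Sum>p\<in>PA L \<union> PA R. ?f p)"
    using sub zero fin by (intro sum.mono_neutral_right) (auto intro: PA_finite)
  also have "\<dots> = (\<Sum>p\<in>PA L. ?f p) + (\<Sum>p\<in>PA R. ?f p)"
    using disj fin by (intro sum.union_disjoint PA_finite) (auto simp: PA_def)
  also have "(\<Sum>p\<in>PA L. ?f p) = (\<Sum>p\<in>PA L. 1 + lca_depth l (fst p) (snd p))"
    by (intro sum.cong) (auto simp: PA_def L_def)
  also have "\<dots> = card (PA L) + cs l"
    using Node.IH(1)[OF dl] by (simp only: sum.distrib L_def) simp
  also have "(\<Sum>p\<in>PA R. ?f p) = (\<Sum>p\<in>PA R. 1 + lca_depth r (fst p) (snd p))"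
    using disj by (intro sum.cong) (auto simp: PA_def L_def R_def)
  also have "\<dots> = card (PA R) + cs r"
    using Node.IH(2)[OF dr] by (simp only: sum.distrib R_def) simp
  finally show ?case
    using fin dl dr by (simp add: card_PA L_def R_def sz_len distinct_card)
qed


fun rl :: "nat \<Rightarrow> btree \<Rightarrow> btree" where
  "rl k (Leaf _) = Leaf k"
| "rl k (Node l r) = Node (rl k l) (rl (k + sz l) r)"

lemma rl_props: "leaves (rl k t) = [k..<k + sz t] \<and> sz (rl k t) = sz t \<and> cs (rl k t) = cs t"
proof (induction t arbitrary: k)
  case (Node l r)
  then show ?case using upt_add_eq_append[of k "k + sz l" "sz r"] by (simp add: add.assoc)
qed simp

lemma rl_phylo: "is_phylo (sz t) (rl 1 t)"
  using rl_props[of 1 t] by (auto simp: is_phylo_def)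

lemma phylo_cop: "is_phylo n t \<Longrightarrow> cophenetic n t = cs t \<and> sz t = n"
proof -
  assume a: "is_phylo n t"
  then have "sz t = n" by (metis is_phylo_def sz_len distinct_card card_atLeastAtMost diff_Suc_1)
  moreover have "{(i,j). 1 \<le> i \<and> i < j \<and> j \<le> n} = PA (set (leaves t))"
    using a by (auto simp: is_phylo_def PA_def)
  ultimately show ?thesis using cs_sum[of t] a
    by (simp add: cophenetic_def is_phylo_def case_prod_beta)
qed

fun B :: "nat \<Rightarrow> nat" where
  "B 0 = 0"
| "B (Suc 0) = 0"
| "B (Suc (Suc m)) = B ((m+3) div 2) + B ((m+2) div 2) + (((m+3) div 2) choose 2) + (((m+2) div 2) choose 2)"

lemma Brec: "n \<ge> 2 \<Longrightarrow> B n = B ((n+1) div 2) + B (n div 2) + (((n+1) div 2) choose 2) + ((n div 2) choose 2)"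
proof -
  assume "n \<ge> 2"
  then obtain m where "n = Suc (Suc m)" by (metis add_2_eq_Suc le_add_diff_inverse)
  then show ?thesis by (simp add: numeral_3_eq_3 numeral_2_eq_2)
qed

fun d :: "nat \<Rightarrow> nat" where
  "d 0 = 0"
| "d (Suc m) = d (Suc m div 2) + Suc m div 2"

lemma d_eq: "d n = d (n div 2) + n div 2"
  by (cases n) auto

lemma d_mono: "a \<le> b \<Longrightarrow> d a \<le> d b"
proof (induction b arbitrary: a rule: less_induct)
  case (less b)
  show ?case
  proof (cases "a = 0")
    case True then show ?thesis by simp
  next
    case False
    then have "b div 2 < b" "a div 2 \<le> b div 2" using less.prems by auto
    then have "d (a div 2) \<le> d (b div 2)" using less.IH by blast
    then show ?thesis using d_eq[of a] d_eq[of b] \<open>a div 2 \<le> b div 2\<close> by linarith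
  qed
qed

lemma B2: "B 2 = 0" using Brec[of 2] by simp

lemma half_sq: "(a::nat)*(a-1) div 2 \<le> a*a"
  by (meson div_le_dividend diff_le_self mult_le_mono2 order_trans)

lemma B_Suc: "B (Suc n) = B n + d n"
proof (induction n rule: less_induct)
  case (less n)
  have "n = 2*(n div 2) \<or> n = 2*(n div 2)+1" by presburger
  consider "n = 0" | "n = 1" | k where "n = 2*k" "k \<ge> 1" | k where "n = 2*k+1" "k \<ge> 1"
  proof -
    obtain k where "n = 2*k \<or> n = 2*k+1" using \<open>n = 2*(n div 2) \<or> n = 2*(n div 2)+1\<close> by blast
    then show ?thesis using that by (cases "k = 0") auto
  qed
  then show ?case
  proof cases
    case 1 then show ?thesis by simp
  next
    case 2 then show ?thesis using B2 by (simp add: numeral_2_eq_2)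
  next
    case 3
    have ih: "B (Suc k) = B k + d k" using less.IH 3 by simp
    have a: "B (Suc n) = B (k+1) + B k + (Suc k choose 2) + (k choose 2)"
      using Brec[of "Suc n"] 3 by simp
    have b: "B n = B k + B k + (k choose 2) + (k choose 2)"
      using Brec[of n] 3 by simp
    have c: "d n = d k + k" using d_eq[of n] 3 by simp
    show ?thesis using a b c ih choose2_Suc[of k] by simp
  next
    case 4
    have ih: "B (Suc k) = B k + d k" using less.IH 4 by simp
    have a: "B (Suc n) = B (k+1) + B (k+1) + (Suc k choose 2) + (Suc k choose 2)"
      using Brec[of "Suc n"] 4 by simp
    have b: "B n = B (k+1) + B k + (Suc k choose 2) + (k choose 2)"
      using Brec[of n] 4 by simp
    have c: "d n = d k + k" using d_eq[of n] 4 by simp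
    show ?thesis using a b c ih choose2_Suc[of k] by simp
  qed
qed

definition F :: "nat \<Rightarrow> nat" where "F a = B a + (a choose 2)"

lemma F_Suc: "F (Suc a) = F a + d a + a"
  by (simp add: F_def B_Suc choose2_Suc)

lemma F_conv: "b \<le> a \<Longrightarrow> F a + F (Suc b) \<le> F (Suc a) + F b"
  using F_Suc[of a] F_Suc[of b] d_mono[of b a] by simp

lemma F_min: "a + b = n \<Longrightarrow> b \<le> a \<Longrightarrow> F ((n+1) div 2) + F (n div 2) \<le> F a + F b"
proof (induction "a - b" arbitrary: a b rule: less_induct)
  case less
  show ?case
  proof (cases "a \<le> b + 1")
    case True
    then have "a = (n+1) div 2" "b = n div 2" using less.prems by auto
    then show ?thesis by simp
  next
    case False
    then obtain a' where a': "a = Suc a'" "Suc b \<le> a'" by (metis Suc_eq_plus1 Suc_le_D not_less_eq_eq)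
    have "F ((n+1) div 2) + F (n div 2) \<le> F a' + F (Suc b)"
      using less.hyps[of a' "Suc b"] a' less.prems by simp
    also have "\<dots> \<le> F a + F b" using F_conv[of b a'] a' by simp
    finally show ?thesis .
  qed
qed

lemma B_F: "n \<ge> 2 \<Longrightarrow> B n = F ((n+1) div 2) + F (n div 2)"
  using Brec by (simp add: F_def)

lemma cs_lower: "B (sz t) \<le> cs t"
proof (induction t)
  case (Leaf x) then show ?case by simp
next
  case (Node l r)
  let ?a = "sz l" and ?b = "sz r"
  have n2: "sz (Node l r) \<ge> 2" using sz_pos[of l] sz_pos[of r] by simp
  have "F ?a + F ?b \<le> cs (Node l r)" using Node.IH by (simp add: F_def)
  moreover have "B (sz (Node l r)) \<le> F ?a + F ?b"
  proof (cases "?b \<le> ?a")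
    case True then show ?thesis using B_F[OF n2] F_min[of ?a ?b] by simp
  next
    case False then show ?thesis using B_F[OF n2] F_min[of ?b ?a] by (simp add: add.commute)
  qed
  ultimately show ?case by linarith
qed

fun bal :: "nat \<Rightarrow> btree" where
  "bal 0 = Leaf 0"
| "bal (Suc 0) = Leaf 0"
| "bal (Suc (Suc m)) = Node (bal ((m+3) div 2)) (bal ((m+2) div 2))"

lemma bal_props: "n \<ge> 1 \<Longrightarrow> sz (bal n) = n \<and> cs (bal n) = B n"
proof (induction n rule: bal.induct)
  case (3 m)
  have "1 \<le> (m+3) div 2" "1 \<le> (m+2) div 2" by auto
  then show ?case using 3 by auto
qed auto

lemma cs_bound: "cs t \<le> sz t * sz t * sz t"
proof (induction t)
  case (Leaf x) then show ?case by simp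
next
  case (Node l r)
  let ?a = "sz l" and ?b = "sz r"
  have ca: "?a choose 2 \<le> ?a * ?a" and cb: "?b choose 2 \<le> ?b * ?b"
    using half_sq[of "sz l"] half_sq[of "sz r"] by (simp_all add: choose_two)
  have a1: "?a \<ge> 1" and b1: "?b \<ge> 1" using sz_pos by auto
  have "?a * ?a \<le> ?a * ?a * ?b" using b1 by simp
  moreover have "?b * ?b \<le> ?a * ?b * ?b" using a1 by simp
  moreover have "(?a + ?b) * (?a + ?b) * (?a + ?b) = ?a*?a*?a + ?b*?b*?b + 3 * (?a*?a*?b) + 3*(?a*?b*?b)"
    by (simp add: algebra_simps)
  ultimately show ?case using Node.IH ca cb by (simp only: sz.simps cs.simps)
qed

lemma min_cop_B:
  assumes "n \<ge> 1" shows "min_cophenetic n = B n"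
proof -
  let ?S = "{cophenetic n t | t. is_phylo n t}"
  have fin: "finite ?S"
  proof (rule finite_subset[of _ "{..n*n*n}"])
    show "?S \<subseteq> {..n*n*n}" using phylo_cop cs_bound by fastforce
  qed simp
  have mem: "B n \<in> ?S"
  proof -
    have p: "is_phylo n (rl 1 (bal n))" using rl_phylo[of "bal n"] bal_props[OF assms] by simp
    have "cophenetic n (rl 1 (bal n)) = B n"
      using phylo_cop[OF p] rl_props[of 1 "bal n"] bal_props[OF assms] by simp
    then show ?thesis using p by (intro CollectI exI[of _ "rl 1 (bal n)"]) simp
  qed
  have low: "\<forall>x\<in>?S. B n \<le> x" using phylo_cop cs_lower by fastforce
  show ?thesis unfolding min_cophenetic_def
    using fin mem low by (intro Min_eqI) auto
qed

theorem mainTheorem11: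
  shows "min_cophenetic 1 = 0 \<and> min_cophenetic 2 = 0 \<and>
    (\<forall>n::nat. n \<ge> 3 \<longrightarrow>
       min_cophenetic n = min_cophenetic ((n + 1) div 2) + min_cophenetic (n div 2)
         + (((n + 1) div 2) choose 2) + ((n div 2) choose 2))"
proof (intro conjI allI impI)
  show "min_cophenetic 1 = 0" using min_cop_B[of 1] by simp
  have "B 2 = 0" using Brec[of 2] by simp
  then show "min_cophenetic 2 = 0" using min_cop_B[of 2] by simp
  fix n :: nat assume "n \<ge> 3"
  moreover have "(n+1) div 2 \<ge> 1" "n div 2 \<ge> 1" using \<open>n \<ge> 3\<close> by auto
  ultimately show "min_cophenetic n = min_cophenetic ((n + 1) div 2) + min_cophenetic (n div 2)
         + (((n + 1) div 2) choose 2) + ((n div 2) choose 2)"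
    using min_cop_B Brec by simp
qed

end
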